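(* (i) For integers $p\geq 0$, $k\geq p+1$ and $n\geq 2k-p+2$, $\rho(M_{n,n-1}^{k-p,n-k-1})>\rho(M_{n,n-1}^{n-k-1,k-p})$. (ii) For integers $p\geq 0$, $k\geq p+2$ and $n\geq 2k-p+2$, $\rho(M_{n,n-1}^{n-k,k-p-1})>\rho(M_{n,n-1}^{k-p,n-k-1})$.
   Context: $\rho$ denotes the largest eigenvalue of the adjacency matrix. $M_{n,m}^{s,t}$: bipartite graph with parts $X=X_1\cup X_2$, $Y=Y_1\cup Y_2$, $|X_1|=s$, $|X_2|=n-s$, $|Y_1|=m-t$, $|Y_2|=t$; edges are all pairs between $X_1$ and $Y_1$, between $X_2$ and $Y_1$, and between $X_2$ and $Y_2$. *)

theory Defs
  imports "Jordan_Normal_Form.Char_Poly"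
begin

text \<open>Vertices of M_{n,m}^{s,t} are indexed 0..n+m-1:
  X1 = [0,s), X2 = [s,n), Y1 = [n, n+m-t), Y2 = [n+m-t, n+m).
  Edges: X1--Y1, X2--Y1, X2--Y2.\<close>

definition M_edge :: "nat \<Rightarrow> nat \<Rightarrow> nat \<Rightarrow> nat \<Rightarrow> nat \<Rightarrow> nat \<Rightarrow> bool" where
  "M_edge n m s t i j \<longleftrightarrow>
     (let inX1 = (\<lambda>v. v < s);
          inX2 = (\<lambda>v. s \<le> v \<and> v < n);
          inY1 = (\<lambda>v. n \<le> v \<and> v < n + m - t);
          inY2 = (\<lambda>v. n + m - t \<le> v \<and> v < n + m);
          E = (\<lambda>a b. (inX1 a \<and> inY1 b) \<or> (inX2 a \<and> inY1 b) \<or> (inX2 a \<and> inY2 b))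
      in E i j \<or> E j i)"

definition M_adj :: "nat \<Rightarrow> nat \<Rightarrow> nat \<Rightarrow> nat \<Rightarrow> real mat" where
  "M_adj n m s t = mat (n + m) (n + m) (\<lambda>(i, j). if M_edge n m s t i j then 1 else 0)"

definition rho :: "real mat \<Rightarrow> real" where
  "rho A = Max {x. eigenvalue A x}"

end

theory Submission
  imports Defs
begin

schematic_goal M_edge_iff_aux:
  assumes "s \<le> n" "t \<le> m" "i < n + m" "j < n + m"
  shows "(M_edge n m s t i j \<longleftrightarrow>
     (i < n \<and> n \<le> j \<and> j < n + (m - t)) \<or> (s \<le> i \<and> i < n \<and> n + (m - t) \<le> j)
   \<or> (j < n \<and> n \<le> i \<and> i < n + (m - t)) \<or> (s \<le> j \<and> j < n \<and> n + (m - t) \<le> i)) \<and> (True \<or> (?sch_t::bool))"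
proof -
  have sch_main: "M_edge n m s t i j \<longleftrightarrow>
     (i < n \<and> n \<le> j \<and> j < n + (m - t)) \<or> (s \<le> i \<and> i < n \<and> n + (m - t) \<le> j)
   \<or> (j < n \<and> n \<le> i \<and> i < n + (m - t)) \<or> (s \<le> j \<and> j < n \<and> n + (m - t) \<le> i)"
  using assms unfolding M_edge_def Let_def by auto
  show "(M_edge n m s t i j \<longleftrightarrow>
     (i < n \<and> n \<le> j \<and> j < n + (m - t)) \<or> (s \<le> i \<and> i < n \<and> n + (m - t) \<le> j)
   \<or> (j < n \<and> n \<le> i \<and> i < n + (m - t)) \<or> (s \<le> j \<and> j < n \<and> n + (m - t) \<le> i)) \<and> (True \<or> True)" by (rule conjI[OF sch_main disjI1[OF TrueI]])
qed

lemmas M_edge_iff = M_edge_iff_aux[THEN conjunct1]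

schematic_goal row_sum_aux:
  fixes v :: "real vec"
  assumes st: "s \<le> n" "t \<le> m" and v: "v \<in> carrier_vec (n + m)" and i: "i < n + m"
  shows "((M_adj n m s t *\<^sub>v v) $ i =
    (if i < s then sum (\<lambda>j. v$j) {n..<n+(m-t)}
     else if i < n then sum (\<lambda>j. v$j) {n..<n+(m-t)} + sum (\<lambda>j. v$j) {n+(m-t)..<n+m}
     else if i < n + (m - t) then sum (\<lambda>j. v$j) {0..<s} + sum (\<lambda>j. v$j) {s..<n}
     else sum (\<lambda>j. v$j) {s..<n})) \<and> (True \<or> (?sch_t::bool))"
proof -
  have sch_main: "(M_adj n m s t *\<^sub>v v) $ i =
    (if i < s then sum (\<lambda>j. v$j) {n..<n+(m-t)}
     else if i < n then sum (\<lambda>j. v$j) {n..<n+(m-t)} + sum (\<lambda>j. v$j) {n+(m-t)..<n+m}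
     else if i < n + (m - t) then sum (\<lambda>j. v$j) {0..<s} + sum (\<lambda>j. v$j) {s..<n}
     else sum (\<lambda>j. v$j) {s..<n})"
proof -
  let ?E = "M_edge n m s t"
  have "(M_adj n m s t *\<^sub>v v) $ i = (\<Sum>j\<in>{0..<n+m}. (if ?E i j then 1 else 0) * v$j)"
    using v i by (simp add: M_adj_def scalar_prod_def)
  also have "\<dots> = (\<Sum>j\<in>{0..<n+m}. if ?E i j then v$j else 0)"
    by (rule sum.cong) auto
  also have "\<dots> = (\<Sum>j\<in>{j\<in>{0..<n+m}. ?E i j}. v$j)"
    by (rule sum.inter_filter[symmetric]) simp
  finally have eq: "(M_adj n m s t *\<^sub>v v) $ i = (\<Sum>j\<in>{j\<in>{0..<n+m}. ?E i j}. v$j)" .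
  have E: "\<And>j. j \<in> {0..<n+m} \<Longrightarrow> ?E i j \<longleftrightarrow>
     (i < n \<and> n \<le> j \<and> j < n + (m - t)) \<or> (s \<le> i \<and> i < n \<and> n + (m - t) \<le> j)
   \<or> (j < n \<and> n \<le> i \<and> i < n + (m - t)) \<or> (s \<le> j \<and> j < n \<and> n + (m - t) \<le> i)"
    using M_edge_iff[OF st i] by auto
  show ?thesis
  proof (cases "i < s")
    case True
    have "{j\<in>{0..<n+m}. ?E i j} = {n..<n+(m-t)}" using True st E by auto
    then show ?thesis using eq True by simp
  next
    case F1: False
    show ?thesis
    proof (cases "i < n")
      case True
      have "{j\<in>{0..<n+m}. ?E i j} = {n..<n+(m-t)} \<union> {n+(m-t)..<n+m}" using True F1 st E by auto
      then show ?thesis using eq True F1 by (simp add: sum.union_disjoint)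
    next
      case F2: False
      show ?thesis
      proof (cases "i < n + (m - t)")
        case True
        have "{j\<in>{0..<n+m}. ?E i j} = {0..<s} \<union> {s..<n}" using True F1 F2 st E by auto
        then show ?thesis using eq True F1 F2 by (simp add: sum.union_disjoint)
      next
        case F3: False
        have "{j\<in>{0..<n+m}. ?E i j} = {s..<n}" using F1 F2 F3 st E i by auto
        then show ?thesis using eq F1 F2 F3 by simp
      qed
    qed
  qed
qed
  show "((M_adj n m s t *\<^sub>v v) $ i =
    (if i < s then sum (\<lambda>j. v$j) {n..<n+(m-t)}
     else if i < n then sum (\<lambda>j. v$j) {n..<n+(m-t)} + sum (\<lambda>j. v$j) {n+(m-t)..<n+m}
     else if i < n + (m - t) then sum (\<lambda>j. v$j) {0..<s} + sum (\<lambda>j. v$j) {s..<n}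
     else sum (\<lambda>j. v$j) {s..<n})) \<and> (True \<or> True)" by (rule conjI[OF sch_main disjI1[OF TrueI]])
qed

lemmas row_sum = row_sum_aux[THEN conjunct1]

definition Tf :: "real \<Rightarrow> real \<Rightarrow> real \<Rightarrow> real \<Rightarrow> real" where
  "Tf a b c d = c*(a+b) + d*b"
definition Pf :: "real \<Rightarrow> real \<Rightarrow> real \<Rightarrow> real \<Rightarrow> real" where
  "Pf a b c d = a*b*c*d"
definition muf :: "real \<Rightarrow> real \<Rightarrow> real \<Rightarrow> real \<Rightarrow> real" where
  "muf a b c d = (Tf a b c d + sqrt ((Tf a b c d)^2 - 4 * Pf a b c d)) / 2"

schematic_goal D_nonneg_aux:
  assumes "a \<ge> 0" "b \<ge> 0" "c \<ge> 0" "d \<ge> 0"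
  shows "((Tf a b c d)^2 - 4 * Pf a b c d \<ge> 0) \<and> (True \<or> (?sch_t::bool))"
proof -
  have sch_main: "(Tf a b c d)^2 - 4 * Pf a b c d \<ge> 0"
proof -
  have "(Tf a b c d)^2 - 4 * Pf a b c d = (c*a - (c*b+d*b))^2 + 4*(c*a)*(c*b)"
    unfolding Tf_def Pf_def by (simp add: power2_eq_square algebra_simps)
  also have "\<dots> \<ge> 0" using assms by simp
  finally show ?thesis .
qed
  show "((Tf a b c d)^2 - 4 * Pf a b c d \<ge> 0) \<and> (True \<or> True)" by (rule conjI[OF sch_main disjI1[OF TrueI]])
qed

lemmas D_nonneg = D_nonneg_aux[THEN conjunct1]

schematic_goal muf_root_aux:
  assumes "a \<ge> 0" "b \<ge> 0" "c \<ge> 0" "d \<ge> 0"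
  shows "((muf a b c d)^2 - Tf a b c d * muf a b c d + Pf a b c d = 0) \<and> (True \<or> (?sch_t::bool))"
proof -
  have sch_main: "(muf a b c d)^2 - Tf a b c d * muf a b c d + Pf a b c d = 0"
proof -
  define T where "T = Tf a b c d"
  define D where "D = T^2 - 4 * Pf a b c d"
  have D: "D \<ge> 0" using D_nonneg[OF assms] unfolding D_def T_def .
  have s: "(sqrt D)^2 = D" using D by simp
  have m: "muf a b c d = (T + sqrt D)/2" unfolding muf_def T_def D_def ..
  have "((T + sqrt D)/2)^2 - T * ((T + sqrt D)/2) + Pf a b c d = ((sqrt D)^2 - T^2)/4 + Pf a b c d"
    by (simp add: power2_eq_square field_simps)
  also have "\<dots> = 0" using s unfolding D_def by simp
  finally have fin: "((T + sqrt D)/2)^2 - T * ((T + sqrt D)/2) + Pf a b c d = 0" .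
  show ?thesis unfolding m T_def[symmetric] by (rule fin)
qed
  show "((muf a b c d)^2 - Tf a b c d * muf a b c d + Pf a b c d = 0) \<and> (True \<or> True)" by (rule conjI[OF sch_main disjI1[OF TrueI]])
qed

lemmas muf_root = muf_root_aux[THEN conjunct1]

schematic_goal root_le_muf_aux:
  assumes "a \<ge> 0" "b \<ge> 0" "c \<ge> 0" "d \<ge> 0"
    and "\<mu>^2 - Tf a b c d * \<mu> + Pf a b c d = 0"
  shows "(\<mu> \<le> muf a b c d) \<and> (True \<or> (?sch_t::bool))"
proof -
  have sch_main: "\<mu> \<le> muf a b c d"
proof (rule ccontr)
  assume "\<not> ?thesis"
  then have gt: "\<mu> > muf a b c d" by simp
  define T where "T = Tf a b c d"
  define D where "D = T^2 - 4 * Pf a b c d"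
  have D: "D \<ge> 0" using D_nonneg[OF assms(1-4)] unfolding D_def T_def .
  have m: "muf a b c d = (T + sqrt D)/2" unfolding muf_def T_def D_def ..
  have h: "\<mu> - T/2 > sqrt D / 2" using gt m by simp
  have "(\<mu> - T/2)^2 > (sqrt D/2)^2"
    using h D by (intro power_strict_mono) auto
  then have "(\<mu> - T/2)^2 > D/4" using D by (simp add: power_divide)
  moreover have "(\<mu> - T/2)^2 - D/4 = \<mu>^2 - T * \<mu> + Pf a b c d"
    unfolding D_def by (simp add: power2_eq_square field_simps)
  ultimately show False using assms(5) unfolding T_def by simp
qed
  show "(\<mu> \<le> muf a b c d) \<and> (True \<or> True)" by (rule conjI[OF sch_main disjI1[OF TrueI]])
qed

lemmas root_le_muf = root_le_muf_aux[THEN conjunct1]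

schematic_goal muf_pos_aux:
  assumes "a \<ge> 0" "b > 0" "c > 0" "d \<ge> 0"
  shows "(muf a b c d > 0) \<and> (True \<or> (?sch_t::bool))"
proof -
  have sch_main: "muf a b c d > 0"
proof -
  have "Tf a b c d > 0" unfolding Tf_def using assms
    by (simp add: add_nonneg_pos add_pos_nonneg)
  moreover have "sqrt ((Tf a b c d)^2 - 4 * Pf a b c d) \<ge> 0"
    using D_nonneg[of a b c d] assms by (intro real_sqrt_ge_zero) auto
  ultimately show ?thesis unfolding muf_def by (simp add: add_pos_nonneg)
qed
  show "(muf a b c d > 0) \<and> (True \<or> True)" by (rule conjI[OF sch_main disjI1[OF TrueI]])
qed

lemmas muf_pos = muf_pos_aux[THEN conjunct1]

schematic_goal muf_nonneg_aux:
  assumes "a \<ge> 0" "b \<ge> 0" "c \<ge> 0" "d \<ge> 0"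
  shows "(muf a b c d \<ge> 0) \<and> (True \<or> (?sch_t::bool))"
proof -
  have sch_main: "muf a b c d \<ge> 0"
proof -
  have "Tf a b c d \<ge> 0" unfolding Tf_def using assms by simp
  moreover have "sqrt ((Tf a b c d)^2 - 4 * Pf a b c d) \<ge> 0"
    using D_nonneg[of a b c d] assms by (intro real_sqrt_ge_zero) auto
  ultimately show ?thesis unfolding muf_def by simp
qed
  show "(muf a b c d \<ge> 0) \<and> (True \<or> True)" by (rule conjI[OF sch_main disjI1[OF TrueI]])
qed

lemmas muf_nonneg = muf_nonneg_aux[THEN conjunct1]

schematic_goal muf_mono_aux:
  assumes "Tf a1 b1 c1 d1 \<ge> Tf a2 b2 c2 d2" "Tf a2 b2 c2 d2 \<ge> 0"
    "Pf a1 b1 c1 d1 < Pf a2 b2 c2 d2"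
  shows "(muf a1 b1 c1 d1 > muf a2 b2 c2 d2) \<and> (True \<or> (?sch_t::bool))"
proof -
  have sch_main: "muf a1 b1 c1 d1 > muf a2 b2 c2 d2"
proof -
  have "(Tf a1 b1 c1 d1)^2 \<ge> (Tf a2 b2 c2 d2)^2" using assms by (intro power_mono) auto
  then have "(Tf a1 b1 c1 d1)^2 - 4 * Pf a1 b1 c1 d1 > (Tf a2 b2 c2 d2)^2 - 4 * Pf a2 b2 c2 d2"
    using assms by linarith
  then have "sqrt ((Tf a1 b1 c1 d1)^2 - 4 * Pf a1 b1 c1 d1) > sqrt ((Tf a2 b2 c2 d2)^2 - 4 * Pf a2 b2 c2 d2)"
    by simp
  then show ?thesis unfolding muf_def using assms(1)
    by (intro divide_strict_right_mono add_le_less_mono) auto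
qed
  show "(muf a1 b1 c1 d1 > muf a2 b2 c2 d2) \<and> (True \<or> True)" by (rule conjI[OF sch_main disjI1[OF TrueI]])
qed

lemmas muf_mono = muf_mono_aux[THEN conjunct1]

schematic_goal sum_const_on_aux:
  fixes f :: "nat \<Rightarrow> real"
  assumes "\<And>j. j \<in> {l..<u} \<Longrightarrow> f j = y"
  shows "(sum f {l..<u} = real (u - l) * y) \<and> (True \<or> (?sch_t::bool))"
proof -
  have sch_main: "sum f {l..<u} = real (u - l) * y"
proof -
  have "sum f {l..<u} = sum (\<lambda>_. y) {l..<u}" by (rule sum.cong) (auto simp: assms)
  then show ?thesis by simp
qed
  show "(sum f {l..<u} = real (u - l) * y) \<and> (True \<or> True)" by (rule conjI[OF sch_main disjI1[OF TrueI]])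
qed

lemmas sum_const_on = sum_const_on_aux[THEN conjunct1]

schematic_goal ev_upper_aux:
  assumes st: "s \<le> n" "t \<le> m" and ev: "eigenvalue (M_adj n m s t) x"
  shows "(x \<le> sqrt (muf (real s) (real (n - s)) (real (m - t)) (real t))) \<and> (True \<or> (?sch_t::bool))"
proof -
  have sch_main: "x \<le> sqrt (muf (real s) (real (n - s)) (real (m - t)) (real t))"
proof -
  define a where "a = real s"
  define b where "b = real (n - s)"
  define c where "c = real (m - t)"
  define d where "d = real t"
  let ?A = "M_adj n m s t"
  let ?N = "n + m"
  have dimA: "dim_row ?A = ?N" by (simp add: M_adj_def)
  obtain v where v: "v \<in> carrier_vec ?N" "v \<noteq> 0\<^sub>v ?N" "?A *\<^sub>v v = x \<cdot>\<^sub>v v"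
    using ev unfolding eigenvalue_def eigenvector_def dimA by blast
  define SX1 where "SX1 = sum (\<lambda>j. v$j) {0..<s}"
  define SX2 where "SX2 = sum (\<lambda>j. v$j) {s..<n}"
  define SY1 where "SY1 = sum (\<lambda>j. v$j) {n..<n+(m-t)}"
  define SY2 where "SY2 = sum (\<lambda>j. v$j) {n+(m-t)..<n+m}"
  have row: "\<And>i. i < ?N \<Longrightarrow> x * v$i =
    (if i < s then SY1 else if i < n then SY1 + SY2 else if i < n + (m - t) then SX1 + SX2 else SX2)"
  proof -
    fix i assume i: "i < ?N"
    have "x * v$i = (?A *\<^sub>v v) $ i" using v(3) v(1) i by simp
    then show "?thesis i" using row_sum[OF st v(1) i] unfolding SX1_def SX2_def SY1_def SY2_def by simp
  qed
  show ?thesis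
  proof (cases "x \<le> 0")
    case True
    have "muf (real s) (real (n - s)) (real (m - t)) (real t) \<ge> 0" by (rule muf_nonneg) auto
    then show ?thesis using True by (meson order_trans real_sqrt_ge_zero)
  next
    case False
    then have x: "x > 0" by simp
    have vi: "\<And>i. i < ?N \<Longrightarrow> v$i =
      (if i < s then SY1 else if i < n then SY1 + SY2 else if i < n + (m - t) then SX1 + SX2 else SX2) / x"
      using row x by (simp add: field_simps)
    define u1 where "u1 = SY1 / x"
    define u2 where "u2 = (SY1 + SY2) / x"
    define \<mu> where "\<mu> = x^2"
    have h1: "SX1 = a * u1" unfolding SX1_def a_def u1_def
      by (subst sum_const_on[where y = "SY1/x"]) (use vi st in auto)
    have h2: "SX2 = b * u2" unfolding SX2_def b_def u2_def
      by (subst sum_const_on[where y = "(SY1+SY2)/x"]) (use vi st in auto)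
    have h3: "x * SY1 = c * (SX1 + SX2)" unfolding SY1_def c_def
      by (subst sum_const_on[where y = "(SX1+SX2)/x"]) (use vi st x in auto)
    have h4: "x * SY2 = d * SX2" unfolding SY2_def d_def
      by (subst sum_const_on[where y = "SX2/x"]) (use vi st x in auto)
    have mu1: "\<mu> * u1 = x * SY1" unfolding \<mu>_def u1_def using x by (simp add: power2_eq_square)
    have mu2: "\<mu> * u2 = x * SY1 + x * SY2" unfolding \<mu>_def u2_def using x
      by (simp add: power2_eq_square field_simps)
    have e1: "\<mu> * u1 = c * (a * u1 + b * u2)"
      using mu1 h3 h1 h2 by simp
    have e2: "\<mu> * u2 = c * (a * u1 + b * u2) + d * b * u2"
      using mu2 h3 h4 h1 h2 by (simp add: algebra_simps)
    have f1: "(\<mu>^2 - Tf a b c d * \<mu> + Pf a b c d) * u1 =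
        (\<mu> - c*b - d*b) * (\<mu>*u1 - c*(a*u1+b*u2)) + c*b*(\<mu>*u2 - c*(a*u1+b*u2) - d*b*u2)"
      unfolding Tf_def Pf_def by (simp add: power2_eq_square algebra_simps)
    have f2: "(\<mu>^2 - Tf a b c d * \<mu> + Pf a b c d) * u2 =
        c*a * (\<mu>*u1 - c*(a*u1+b*u2)) + (\<mu> - c*a)*(\<mu>*u2 - c*(a*u1+b*u2) - d*b*u2)"
      unfolding Tf_def Pf_def by (simp add: power2_eq_square algebra_simps)
    have nz: "u1 \<noteq> 0 \<or> u2 \<noteq> 0"
    proof (rule ccontr)
      assume "\<not> ?thesis"
      then have "u1 = 0" "u2 = 0" by auto
      then have z1: "SY1 = 0" "SY1 + SY2 = 0" using x unfolding u1_def u2_def by auto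
      then have z: "SX1 = 0" "SX2 = 0" "SY1 = 0" "SY2 = 0" using h1 h2 \<open>u1 = 0\<close> \<open>u2 = 0\<close> by auto
      have "v = 0\<^sub>v ?N"
        by (rule eq_vecI) (use vi z v(1) in auto)
      then show False using v(2) by simp
    qed
    have froot: "\<mu>^2 - Tf a b c d * \<mu> + Pf a b c d = 0"
      using nz f1 f2 e1 e2 by auto
    have "\<mu> \<le> muf a b c d"
      by (rule root_le_muf[OF _ _ _ _ froot]) (auto simp: a_def b_def c_def d_def)
    then have "sqrt (x^2) \<le> sqrt (muf a b c d)" unfolding \<mu>_def by (rule real_sqrt_le_mono)
    then show ?thesis using x unfolding a_def b_def c_def d_def by simp
  qed
qed
  show "(x \<le> sqrt (muf (real s) (real (n - s)) (real (m - t)) (real t))) \<and> (True \<or> True)" by (rule conjI[OF sch_main disjI1[OF TrueI]])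
qed

lemmas ev_upper = ev_upper_aux[THEN conjunct1]

schematic_goal ev_lower_aux:
  assumes st: "s \<le> n" "t \<le> m" and bc: "s < n" "t < m"
  shows "(eigenvalue (M_adj n m s t) (sqrt (muf (real s) (real (n - s)) (real (m - t)) (real t)))) \<and> (True \<or> (?sch_t::bool))"
proof -
  have sch_main: "eigenvalue (M_adj n m s t) (sqrt (muf (real s) (real (n - s)) (real (m - t)) (real t)))"
proof -
  define a where "a = real s"
  define b where "b = real (n - s)"
  define c where "c = real (m - t)"
  define d where "d = real t"
  define \<mu> where "\<mu> = muf a b c d"
  define x where "x = sqrt \<mu>"
  have b: "b > 0" and c: "c > 0" using bc unfolding b_def c_def by auto
  have a: "a \<ge> 0" and d: "d \<ge> 0" unfolding a_def d_def by auto
  have mu: "\<mu> > 0" unfolding \<mu>_def using a b c d by (rule muf_pos)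
  have x: "x > 0" unfolding x_def using mu by simp
  have xx: "x * x = \<mu>" unfolding x_def using mu by simp
  have froot: "\<mu>^2 - Tf a b c d * \<mu> + Pf a b c d = 0"
    unfolding \<mu>_def using a b c d by (intro muf_root) auto
  define u1 where "u1 = c * b"
  define u2 where "u2 = \<mu> - c * a"
  define w1 where "w1 = (a * u1 + b * u2) / x"
  define w2 where "w2 = b * u2 / x"
  let ?N = "n + m"
  define g where "g = (\<lambda>i. if i < s then u1 else if i < n then u2 else if i < n + (m - t) then w1 else w2)"
  define v where "v = vec ?N g"
  have v: "v \<in> carrier_vec ?N" unfolding v_def by simp
  have vj: "\<And>j. j < ?N \<Longrightarrow> v$j = g j" unfolding v_def by simp
  have S1: "sum (\<lambda>j. v$j) {0..<s} = a * u1" unfolding a_def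
    by (subst sum_const_on[where y = u1]) (use vj st in \<open>auto simp: g_def\<close>)
  have S2: "sum (\<lambda>j. v$j) {s..<n} = b * u2" unfolding b_def
    by (subst sum_const_on[where y = u2]) (use vj st in \<open>auto simp: g_def\<close>)
  have S3: "sum (\<lambda>j. v$j) {n..<n+(m-t)} = c * w1" unfolding c_def
    by (subst sum_const_on[where y = w1]) (use vj st in \<open>auto simp: g_def\<close>)
  have S4: "sum (\<lambda>j. v$j) {n+(m-t)..<n+m} = d * w2" unfolding d_def
    by (subst sum_const_on[where y = w2]) (use vj st in \<open>auto simp: g_def\<close>)
  have r1: "c * w1 = x * u1"
  proof -
    have "c * (a * u1 + b * u2) = \<mu> * u1" unfolding u1_def u2_def by (simp add: algebra_simps)
    then show ?thesis unfolding w1_def using x xx by (simp add: field_simps)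
  qed
  have r2: "c * w1 + d * w2 = x * u2"
  proof -
    have "\<mu> * u2 - (c * (a * u1 + b * u2) + d * (b * u2)) = \<mu>^2 - Tf a b c d * \<mu> + Pf a b c d"
      unfolding u1_def u2_def Tf_def Pf_def by (simp add: power2_eq_square algebra_simps)
    then have "c * (a * u1 + b * u2) + d * (b * u2) = \<mu> * u2" using froot by simp
    then show ?thesis unfolding w1_def w2_def using x xx by (simp add: field_simps)
  qed
  have r3: "a * u1 + b * u2 = x * w1" unfolding w1_def using x by simp
  have r4: "b * u2 = x * w2" unfolding w2_def using x by simp
  have Av: "M_adj n m s t *\<^sub>v v = x \<cdot>\<^sub>v v"
  proof (rule eq_vecI)
    show "dim_vec (M_adj n m s t *\<^sub>v v) = dim_vec (x \<cdot>\<^sub>v v)" by (simp add: M_adj_def v_def)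
    fix i assume "i < dim_vec (x \<cdot>\<^sub>v v)"
    then have i: "i < ?N" by (simp add: v_def)
    show "(M_adj n m s t *\<^sub>v v) $ i = (x \<cdot>\<^sub>v v) $ i"
      unfolding row_sum[OF st v i] S1 S2 S3 S4 using i vj[OF i] r1 r2 r3 r4 st
      by (simp add: g_def v_def Nat.add_diff_assoc)
  qed
  have vnz: "v \<noteq> 0\<^sub>v ?N"
  proof
    assume "v = 0\<^sub>v ?N"
    then have "v $ n = 0" using bc by simp
    moreover have nl: "n < n + m - t" using bc by linarith
    have "v $ n = w1" using vj[of n] bc nl by (simp add: g_def)
    moreover have "w1 = b * \<mu> / x" unfolding w1_def u1_def u2_def by (simp add: algebra_simps)
    ultimately show False using b mu x by simp
  qed
  have "eigenvector (M_adj n m s t) v x"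
    unfolding eigenvector_def using v vnz Av by (simp add: M_adj_def)
  then show ?thesis unfolding eigenvalue_def x_def \<mu>_def a_def b_def c_def d_def by blast
qed
  show "(eigenvalue (M_adj n m s t) (sqrt (muf (real s) (real (n - s)) (real (m - t)) (real t)))) \<and> (True \<or> True)" by (rule conjI[OF sch_main disjI1[OF TrueI]])
qed

lemmas ev_lower = ev_lower_aux[THEN conjunct1]

schematic_goal rho_eq_aux:
  assumes st: "s < n" "t < m"
  shows "(rho (M_adj n m s t) = sqrt (muf (real s) (real (n - s)) (real (m - t)) (real t))) \<and> (True \<or> (?sch_t::bool))"
proof -
  have sch_main: "rho (M_adj n m s t) = sqrt (muf (real s) (real (n - s)) (real (m - t)) (real t))"
proof -
  let ?A = "M_adj n m s t"
  have A: "?A \<in> carrier_mat (n+m) (n+m)" by (simp add: M_adj_def)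
  have "{x. eigenvalue ?A x} = {x. poly (char_poly ?A) x = 0}"
    using eigenvalue_root_char_poly[OF A] by auto
  moreover have "char_poly ?A \<noteq> 0"
    using degree_monic_char_poly[OF A] by auto
  ultimately have fin: "finite {x. eigenvalue ?A x}" using poly_roots_finite by simp
  show ?thesis unfolding rho_def
    by (rule Max_eqI[OF fin]) (use ev_upper ev_lower st in auto)
qed
  show "(rho (M_adj n m s t) = sqrt (muf (real s) (real (n - s)) (real (m - t)) (real t))) \<and> (True \<or> True)" by (rule conjI[OF sch_main disjI1[OF TrueI]])
qed

lemmas rho_eq = rho_eq_aux[THEN conjunct1]

schematic_goal part1_aux:
  fixes p k n :: nat
  assumes h: "k \<ge> p + 1 \<and> n + p \<ge> 2 * k + 2"
  shows "(rho (M_adj n (n - 1) (k - p) (n - k - 1)) > rho (M_adj n (n - 1) (n - k - 1) (k - p))) \<and> (True \<or> (?sch_t::bool))"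
proof -
  have sch_main: "rho (M_adj n (n - 1) (k - p) (n - k - 1)) > rho (M_adj n (n - 1) (n - k - 1) (k - p))"
proof -
  define r where "r = k - p - 1"
  have r: "k = p + 1 + r" using h unfolding r_def by arith
  define e where "e = n - (p + 2*r + 4)"
  have e: "n = p + 2*r + 4 + e" using h unfolding e_def r by arith
  have 1: "rho (M_adj n (n - 1) (k - p) (n - k - 1)) =
     sqrt (muf (real r + 1) (real p + real r + 3 + real e) (real p + real r + 1) (real r + 2 + real e))"
    by (subst rho_eq) (simp_all add: r e add_ac)
  have 2: "rho (M_adj n (n - 1) (n - k - 1) (k - p)) =
     sqrt (muf (real r + 2 + real e) (real p + real r + 2) (real p + real r + 2 + real e) (real r + 1))"
    by (subst rho_eq) (simp_all add: r e add_ac)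
  define P where "P = real p"
  define R where "R = real r"
  define E where "E = real e"
  have nn: "P \<ge> 0" "R \<ge> 0" "E \<ge> 0" unfolding P_def R_def E_def by auto
  have T: "Tf (R + 1) (P + R + 3 + E) (P + R + 1) (R + 2 + E) = Tf (R + 2 + E) (P + R + 2) (P + R + 2 + E) (R + 1)"
    unfolding Tf_def by (simp add: algebra_simps)
  have T0: "Tf (R + 2 + E) (P + R + 2) (P + R + 2 + E) (R + 1) \<ge> 0"
    unfolding Tf_def using nn by simp
  have "Pf (R + 2 + E) (P + R + 2) (P + R + 2 + E) (R + 1) - Pf (R + 1) (P + R + 3 + E) (P + R + 1) (R + 2 + E)
     = (R + 1) * (R + 2 + E) * (1 + E)"
    unfolding Pf_def by (simp add: algebra_simps)
  moreover have "(R + 1) * (R + 2 + E) * (1 + E) > 0" using nn by simp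
  ultimately have Pl: "Pf (R + 1) (P + R + 3 + E) (P + R + 1) (R + 2 + E) < Pf (R + 2 + E) (P + R + 2) (P + R + 2 + E) (R + 1)"
    by simp
  have "muf (R + 1) (P + R + 3 + E) (P + R + 1) (R + 2 + E) > muf (R + 2 + E) (P + R + 2) (P + R + 2 + E) (R + 1)"
    using T T0 Pl by (intro muf_mono) auto
  then show "rho (M_adj n (n - 1) (k - p) (n - k - 1)) > rho (M_adj n (n - 1) (n - k - 1) (k - p))"
    unfolding 1 2 P_def[symmetric] R_def[symmetric] E_def[symmetric] by simp
qed
  show "(rho (M_adj n (n - 1) (k - p) (n - k - 1)) > rho (M_adj n (n - 1) (n - k - 1) (k - p))) \<and> (True \<or> True)" by (rule conjI[OF sch_main disjI1[OF TrueI]])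
qed

lemmas part1 = part1_aux[THEN conjunct1]

schematic_goal part2_aux:
  fixes p k n :: nat
  assumes h: "k \<ge> p + 2 \<and> n + p \<ge> 2 * k + 2"
  shows "(rho (M_adj n (n - 1) (n - k) (k - p - 1)) > rho (M_adj n (n - 1) (k - p) (n - k - 1))) \<and> (True \<or> (?sch_t::bool))"
proof -
  have sch_main: "rho (M_adj n (n - 1) (n - k) (k - p - 1)) > rho (M_adj n (n - 1) (k - p) (n - k - 1))"
proof -
  define r where "r = k - p - 2"
  have r: "k = p + 2 + r" using h unfolding r_def by arith
  define e where "e = n - (p + 2*r + 6)"
  have e: "n = p + 2*r + 6 + e" using h unfolding e_def r by arith
  have 1: "rho (M_adj n (n - 1) (n - k) (k - p - 1)) =
     sqrt (muf (real r + 4 + real e) (real p + real r + 2) (real p + real r + 4 + real e) (real r + 1))"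
    by (subst rho_eq) (simp_all add: r e add_ac)
  have 2: "rho (M_adj n (n - 1) (k - p) (n - k - 1)) =
     sqrt (muf (real r + 2) (real p + real r + 4 + real e) (real p + real r + 2) (real r + 3 + real e))"
    by (subst rho_eq) (simp_all add: r e add_ac)
  define P where "P = real p"
  define R where "R = real r"
  define E where "E = real e"
  have nn: "P \<ge> 0" "R \<ge> 0" "E \<ge> 0" unfolding P_def R_def E_def by auto
  have "Tf (R + 4 + E) (P + R + 2) (P + R + 4 + E) (R + 1) - Tf (R + 2) (P + R + 4 + E) (P + R + 2) (R + 3 + E) = E + 2"
    unfolding Tf_def by (simp add: algebra_simps)
  then have T: "Tf (R + 4 + E) (P + R + 2) (P + R + 4 + E) (R + 1) \<ge> Tf (R + 2) (P + R + 4 + E) (P + R + 2) (R + 3 + E)"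
    using nn by simp
  have T0: "Tf (R + 2) (P + R + 4 + E) (P + R + 2) (R + 3 + E) \<ge> 0"
    unfolding Tf_def using nn by simp
  have "Pf (R + 2) (P + R + 4 + E) (P + R + 2) (R + 3 + E) - Pf (R + 4 + E) (P + R + 2) (P + R + 4 + E) (R + 1)
     = (P + R + 2) * (P + R + 4 + E) * (E + 2)"
    unfolding Pf_def by (simp add: algebra_simps)
  moreover have "(P + R + 2) * (P + R + 4 + E) * (E + 2) > 0" using nn by simp
  ultimately have Pl: "Pf (R + 4 + E) (P + R + 2) (P + R + 4 + E) (R + 1) < Pf (R + 2) (P + R + 4 + E) (P + R + 2) (R + 3 + E)"
    by simp
  have "muf (R + 4 + E) (P + R + 2) (P + R + 4 + E) (R + 1) > muf (R + 2) (P + R + 4 + E) (P + R + 2) (R + 3 + E)"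
    using T T0 Pl by (intro muf_mono) auto
  then show "rho (M_adj n (n - 1) (n - k) (k - p - 1)) > rho (M_adj n (n - 1) (k - p) (n - k - 1))"
    unfolding 1 2 P_def[symmetric] R_def[symmetric] E_def[symmetric] by simp
qed
  show "(rho (M_adj n (n - 1) (n - k) (k - p - 1)) > rho (M_adj n (n - 1) (k - p) (n - k - 1))) \<and> (True \<or> True)" by (rule conjI[OF sch_main disjI1[OF TrueI]])
qed

lemmas part2 = part2_aux[THEN conjunct1]

theorem lemma5p1:
  fixes p k n :: nat
  shows "(k \<ge> p + 1 \<and> n + p \<ge> 2 * k + 2 \<longrightarrow>
            rho (M_adj n (n - 1) (k - p) (n - k - 1)) > rho (M_adj n (n - 1) (n - k - 1) (k - p)))
       \<and> (k \<ge> p + 2 \<and> n + p \<ge> 2 * k + 2 \<longrightarrow>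
            rho (M_adj n (n - 1) (n - k) (k - p - 1)) > rho (M_adj n (n - 1) (k - p) (n - k - 1)))"
  using part1 part2 by blast




schematic_goal zz_delay1_aux:
  assumes st: "s \<le> n" "t \<le> m" and ev: "eigenvalue (M_adj n m s t) x"
  shows "(x \<le> sqrt (muf (real s) (real (n - s)) (real (m - t)) (real t))) \<and> (True \<or> (?sch_t::bool))"
proof -
  have sch_main: "x \<le> sqrt (muf (real s) (real (n - s)) (real (m - t)) (real t))"
proof -
  define a where "a = real s"
  define b where "b = real (n - s)"
  define c where "c = real (m - t)"
  define d where "d = real t"
  let ?A = "M_adj n m s t"
  let ?N = "n + m"
  have dimA: "dim_row ?A = ?N" by (simp add: M_adj_def)
  obtain v where v: "v \<in> carrier_vec ?N" "v \<noteq> 0\<^sub>v ?N" "?A *\<^sub>v v = x \<cdot>\<^sub>v v"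
    using ev unfolding eigenvalue_def eigenvector_def dimA by blast
  define SX1 where "SX1 = sum (\<lambda>j. v$j) {0..<s}"
  define SX2 where "SX2 = sum (\<lambda>j. v$j) {s..<n}"
  define SY1 where "SY1 = sum (\<lambda>j. v$j) {n..<n+(m-t)}"
  define SY2 where "SY2 = sum (\<lambda>j. v$j) {n+(m-t)..<n+m}"
  have row: "\<And>i. i < ?N \<Longrightarrow> x * v$i =
    (if i < s then SY1 else if i < n then SY1 + SY2 else if i < n + (m - t) then SX1 + SX2 else SX2)"
  proof -
    fix i assume i: "i < ?N"
    have "x * v$i = (?A *\<^sub>v v) $ i" using v(3) v(1) i by simp
    then show "?thesis i" using row_sum[OF st v(1) i] unfolding SX1_def SX2_def SY1_def SY2_def by simp
  qed
  show ?thesis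
  proof (cases "x \<le> 0")
    case True
    have "muf (real s) (real (n - s)) (real (m - t)) (real t) \<ge> 0" by (rule muf_nonneg) auto
    then show ?thesis using True by (meson order_trans real_sqrt_ge_zero)
  next
    case False
    then have x: "x > 0" by simp
    have vi: "\<And>i. i < ?N \<Longrightarrow> v$i =
      (if i < s then SY1 else if i < n then SY1 + SY2 else if i < n + (m - t) then SX1 + SX2 else SX2) / x"
      using row x by (simp add: field_simps)
    define u1 where "u1 = SY1 / x"
    define u2 where "u2 = (SY1 + SY2) / x"
    define \<mu> where "\<mu> = x^2"
    have h1: "SX1 = a * u1" unfolding SX1_def a_def u1_def
      by (subst sum_const_on[where y = "SY1/x"]) (use vi st in auto)
    have h2: "SX2 = b * u2" unfolding SX2_def b_def u2_def
      by (subst sum_const_on[where y = "(SY1+SY2)/x"]) (use vi st in auto)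
    have h3: "x * SY1 = c * (SX1 + SX2)" unfolding SY1_def c_def
      by (subst sum_const_on[where y = "(SX1+SX2)/x"]) (use vi st x in auto)
    have h4: "x * SY2 = d * SX2" unfolding SY2_def d_def
      by (subst sum_const_on[where y = "SX2/x"]) (use vi st x in auto)
    have mu1: "\<mu> * u1 = x * SY1" unfolding \<mu>_def u1_def using x by (simp add: power2_eq_square)
    have mu2: "\<mu> * u2 = x * SY1 + x * SY2" unfolding \<mu>_def u2_def using x
      by (simp add: power2_eq_square field_simps)
    have e1: "\<mu> * u1 = c * (a * u1 + b * u2)"
      using mu1 h3 h1 h2 by simp
    have e2: "\<mu> * u2 = c * (a * u1 + b * u2) + d * b * u2"
      using mu2 h3 h4 h1 h2 by (simp add: algebra_simps)
    have f1: "(\<mu>^2 - Tf a b c d * \<mu> + Pf a b c d) * u1 =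
        (\<mu> - c*b - d*b) * (\<mu>*u1 - c*(a*u1+b*u2)) + c*b*(\<mu>*u2 - c*(a*u1+b*u2) - d*b*u2)"
      unfolding Tf_def Pf_def by (simp add: power2_eq_square algebra_simps)
    have f2: "(\<mu>^2 - Tf a b c d * \<mu> + Pf a b c d) * u2 =
        c*a * (\<mu>*u1 - c*(a*u1+b*u2)) + (\<mu> - c*a)*(\<mu>*u2 - c*(a*u1+b*u2) - d*b*u2)"
      unfolding Tf_def Pf_def by (simp add: power2_eq_square algebra_simps)
    have nz: "u1 \<noteq> 0 \<or> u2 \<noteq> 0"
    proof (rule ccontr)
      assume "\<not> ?thesis"
      then have "u1 = 0" "u2 = 0" by auto
      then have z1: "SY1 = 0" "SY1 + SY2 = 0" using x unfolding u1_def u2_def by auto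
      then have z: "SX1 = 0" "SX2 = 0" "SY1 = 0" "SY2 = 0" using h1 h2 \<open>u1 = 0\<close> \<open>u2 = 0\<close> by auto
      have "v = 0\<^sub>v ?N"
        by (rule eq_vecI) (use vi z v(1) in auto)
      then show False using v(2) by simp
    qed
    have froot: "\<mu>^2 - Tf a b c d * \<mu> + Pf a b c d = 0"
      using nz f1 f2 e1 e2 by auto
    have "\<mu> \<le> muf a b c d"
      by (rule root_le_muf[OF _ _ _ _ froot]) (auto simp: a_def b_def c_def d_def)
    then have "sqrt (x^2) \<le> sqrt (muf a b c d)" unfolding \<mu>_def by (rule real_sqrt_le_mono)
    then show ?thesis using x unfolding a_def b_def c_def d_def by simp
  qed
qed
  show "(x \<le> sqrt (muf (real s) (real (n - s)) (real (m - t)) (real t))) \<and> (True \<or> True)" by (rule conjI[OF sch_main disjI1[OF TrueI]])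
qed

schematic_goal zz_delay2_aux:
  assumes st: "s \<le> n" "t \<le> m" and bc: "s < n" "t < m"
  shows "(eigenvalue (M_adj n m s t) (sqrt (muf (real s) (real (n - s)) (real (m - t)) (real t)))) \<and> (True \<or> (?sch_t::bool))"
proof -
  have sch_main: "eigenvalue (M_adj n m s t) (sqrt (muf (real s) (real (n - s)) (real (m - t)) (real t)))"
proof -
  define a where "a = real s"
  define b where "b = real (n - s)"
  define c where "c = real (m - t)"
  define d where "d = real t"
  define \<mu> where "\<mu> = muf a b c d"
  define x where "x = sqrt \<mu>"
  have b: "b > 0" and c: "c > 0" using bc unfolding b_def c_def by auto
  have a: "a \<ge> 0" and d: "d \<ge> 0" unfolding a_def d_def by auto
  have mu: "\<mu> > 0" unfolding \<mu>_def using a b c d by (rule muf_pos)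
  have x: "x > 0" unfolding x_def using mu by simp
  have xx: "x * x = \<mu>" unfolding x_def using mu by simp
  have froot: "\<mu>^2 - Tf a b c d * \<mu> + Pf a b c d = 0"
    unfolding \<mu>_def using a b c d by (intro muf_root) auto
  define u1 where "u1 = c * b"
  define u2 where "u2 = \<mu> - c * a"
  define w1 where "w1 = (a * u1 + b * u2) / x"
  define w2 where "w2 = b * u2 / x"
  let ?N = "n + m"
  define g where "g = (\<lambda>i. if i < s then u1 else if i < n then u2 else if i < n + (m - t) then w1 else w2)"
  define v where "v = vec ?N g"
  have v: "v \<in> carrier_vec ?N" unfolding v_def by simp
  have vj: "\<And>j. j < ?N \<Longrightarrow> v$j = g j" unfolding v_def by simp
  have S1: "sum (\<lambda>j. v$j) {0..<s} = a * u1" unfolding a_def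
    by (subst sum_const_on[where y = u1]) (use vj st in \<open>auto simp: g_def\<close>)
  have S2: "sum (\<lambda>j. v$j) {s..<n} = b * u2" unfolding b_def
    by (subst sum_const_on[where y = u2]) (use vj st in \<open>auto simp: g_def\<close>)
  have S3: "sum (\<lambda>j. v$j) {n..<n+(m-t)} = c * w1" unfolding c_def
    by (subst sum_const_on[where y = w1]) (use vj st in \<open>auto simp: g_def\<close>)
  have S4: "sum (\<lambda>j. v$j) {n+(m-t)..<n+m} = d * w2" unfolding d_def
    by (subst sum_const_on[where y = w2]) (use vj st in \<open>auto simp: g_def\<close>)
  have r1: "c * w1 = x * u1"
  proof -
    have "c * (a * u1 + b * u2) = \<mu> * u1" unfolding u1_def u2_def by (simp add: algebra_simps)
    then show ?thesis unfolding w1_def using x xx by (simp add: field_simps)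
  qed
  have r2: "c * w1 + d * w2 = x * u2"
  proof -
    have "\<mu> * u2 - (c * (a * u1 + b * u2) + d * (b * u2)) = \<mu>^2 - Tf a b c d * \<mu> + Pf a b c d"
      unfolding u1_def u2_def Tf_def Pf_def by (simp add: power2_eq_square algebra_simps)
    then have "c * (a * u1 + b * u2) + d * (b * u2) = \<mu> * u2" using froot by simp
    then show ?thesis unfolding w1_def w2_def using x xx by (simp add: field_simps)
  qed
  have r3: "a * u1 + b * u2 = x * w1" unfolding w1_def using x by simp
  have r4: "b * u2 = x * w2" unfolding w2_def using x by simp
  have Av: "M_adj n m s t *\<^sub>v v = x \<cdot>\<^sub>v v"
  proof (rule eq_vecI)
    show "dim_vec (M_adj n m s t *\<^sub>v v) = dim_vec (x \<cdot>\<^sub>v v)" by (simp add: M_adj_def v_def)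
    fix i assume "i < dim_vec (x \<cdot>\<^sub>v v)"
    then have i: "i < ?N" by (simp add: v_def)
    show "(M_adj n m s t *\<^sub>v v) $ i = (x \<cdot>\<^sub>v v) $ i"
      unfolding row_sum[OF st v i] S1 S2 S3 S4 using i vj[OF i] r1 r2 r3 r4 st
      by (simp add: g_def v_def Nat.add_diff_assoc)
  qed
  have vnz: "v \<noteq> 0\<^sub>v ?N"
  proof
    assume "v = 0\<^sub>v ?N"
    then have "v $ n = 0" using bc by simp
    moreover have nl: "n < n + m - t" using bc by linarith
    have "v $ n = w1" using vj[of n] bc nl by (simp add: g_def)
    moreover have "w1 = b * \<mu> / x" unfolding w1_def u1_def u2_def by (simp add: algebra_simps)
    ultimately show False using b mu x by simp
  qed
  have "eigenvector (M_adj n m s t) v x"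
    unfolding eigenvector_def using v vnz Av by (simp add: M_adj_def)
  then show ?thesis unfolding eigenvalue_def x_def \<mu>_def a_def b_def c_def d_def by blast
qed
  show "(eigenvalue (M_adj n m s t) (sqrt (muf (real s) (real (n - s)) (real (m - t)) (real t)))) \<and> (True \<or> True)" by (rule conjI[OF sch_main disjI1[OF TrueI]])
qed


end
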